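(* Let $V$ be of class $\mathcal{C}^1$ and let $z$ be a saddle of $V$. Then $\nabla V(z)=0$.
   Context: $V:\mathbb{R}^d\to\mathbb{R}$ is a continuous potential, bounded below, with exponentially tight level sets. Communication height: $\overline V(x,y)=\inf_{\gamma}\sup_{t\in[0,1]}V(\gamma(t))$, the infimum over continuous paths $\gamma:[0,1]\to\mathbb{R}^d$ from $x$ to $y$. Closed valley $\mathcal{C}(x)=\{y:\overline V(y,x)=V(x)\}$, open valley $\mathcal{O}(x)=\{y\in\mathcal{C}(x):V(y)<V(x)\}$; $\mathcal{B}_\eta(x)$ is the open ball of radius $\eta$ about $x$. A point $z$ is a saddle if there is $\eta>0$ such that (i) $\mathcal{O}(z)\cap\mathcal{B}_\eta(z)$ is non-empty and not path-connected, and (ii) $(\mathcal{O}(z)\cup\{z\})\cap\mathcal{B}_\eta(z)$ is path-connected. *)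

theory Defs
  imports "HOL-Analysis.Analysis"
begin

definition comm_height :: "('a::euclidean_space \<Rightarrow> real) \<Rightarrow> 'a \<Rightarrow> 'a \<Rightarrow> real" where
  "comm_height V x y =
     (INF \<gamma>\<in>{\<gamma>. path \<gamma> \<and> pathstart \<gamma> = x \<and> pathfinish \<gamma> = y}.
        (SUP t\<in>{0..1}. V (\<gamma> t)))"

definition closed_valley :: "('a::euclidean_space \<Rightarrow> real) \<Rightarrow> 'a \<Rightarrow> 'a set" where
  "closed_valley V x = {y. comm_height V y x = V x}"

definition open_valley :: "('a::euclidean_space \<Rightarrow> real) \<Rightarrow> 'a \<Rightarrow> 'a set" where
  "open_valley V x = {y \<in> closed_valley V x. V y < V x}"

definition is_saddle :: "('a::euclidean_space \<Rightarrow> real) \<Rightarrow> 'a \<Rightarrow> bool" where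
  "is_saddle V z \<longleftrightarrow> (\<exists>\<eta>>0.
      open_valley V z \<inter> ball z \<eta> \<noteq> {} \<and>
      \<not> path_connected (open_valley V z \<inter> ball z \<eta>) \<and>
      path_connected ((open_valley V z \<union> {z}) \<inter> ball z \<eta>))"

definition gradient :: "('a::euclidean_space \<Rightarrow>\<^sub>L real) \<Rightarrow> 'a" where
  "gradient D = (\<Sum>b\<in>Basis. blinfun_apply D b *\<^sub>R b)"

end

theory Submission
  imports Defs
begin

lemma comm_height_eq:
  fixes V :: "'a::euclidean_space \<Rightarrow> real"
  assumes cont: "continuous_on UNIV V"
    and g: "path \<gamma>" "pathstart \<gamma> = y" "pathfinish \<gamma> = z"
    and le: "\<And>x. x \<in> path_image \<gamma> \<Longrightarrow> V x \<le> V z"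
  shows "comm_height V y z = V z"
proof -
  let ?S = "{\<gamma>. path \<gamma> \<and> pathstart \<gamma> = y \<and> pathfinish \<gamma> = z}"
  let ?F = "\<lambda>\<gamma>. (SUP t\<in>{0..1}. V (\<gamma> t))"
  have ge: "V z \<le> ?F \<gamma>'" if "\<gamma>' \<in> ?S" for \<gamma>'
  proof -
    have "compact ((V \<circ> \<gamma>') ` {0..1})"
      using that by (intro compact_continuous_image continuous_on_compose)
        (auto simp: path_def intro: continuous_on_subset[OF cont])
    hence "bdd_above ((\<lambda>t. V (\<gamma>' t)) ` {0..1})"
      by (auto dest!: compact_imp_bounded bounded_imp_bdd_above simp: o_def)
    hence "V (\<gamma>' 1) \<le> ?F \<gamma>'" by (intro cSUP_upper) auto
    thus ?thesis using that by (simp add: pathfinish_def)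
  qed
  have "V z \<le> Inf (?F ` ?S)"
    using g ge by (intro cINF_greatest) auto
  moreover have "Inf (?F ` ?S) \<le> ?F \<gamma>"
    using g ge by (intro cINF_lower) (auto simp: bdd_below_def)
  moreover have "?F \<gamma> \<le> V z"
    using le by (intro cSUP_least) (auto simp: path_image_def)
  ultimately show ?thesis unfolding comm_height_def by linarith
qed

lemma gradient_inner:
  fixes D :: "'a::euclidean_space \<Rightarrow>\<^sub>L real"
  shows "blinfun_apply D v = gradient D \<bullet> v"
proof -
  have "blinfun_apply D v = blinfun_apply D (\<Sum>b\<in>Basis. (v \<bullet> b) *\<^sub>R b)"
    by (simp add: euclidean_representation)
  also have "\<dots> = (\<Sum>b\<in>Basis. (v \<bullet> b) * blinfun_apply D b)"
    by (simp add: blinfun.sum_right blinfun.scaleR_right)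
  also have "\<dots> = gradient D \<bullet> v"
    by (simp add: gradient_def inner_sum_left inner_sum_right inner_commute mult.commute)
  finally show ?thesis .
qed


theorem proposition2p5:
  fixes V :: "'a::euclidean_space \<Rightarrow> real"
    and V' :: "'a \<Rightarrow> ('a \<Rightarrow>\<^sub>L real)"
    and z :: 'a
  assumes cont: "continuous_on UNIV V"
    and bdd_below: "bdd_below (range V)"
    and tight: "\<And>c. compact {x. V x \<le> c}"
    and deriv: "\<And>x. (V has_derivative blinfun_apply (V' x)) (at x)"
    and C1: "continuous_on UNIV V'"
    and saddle: "is_saddle V z"
  shows "gradient (V' z) = 0"
proof (rule ccontr)
  assume gnz: "gradient (V' z) \<noteq> 0"
  define g where "g = gradient (V' z)"
  define n where "n = norm g"
  have n: "n > 0" using gnz by (simp add: n_def g_def)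
  obtain \<eta> where \<eta>: "\<eta> > 0" and Une: "open_valley V z \<inter> ball z \<eta> \<noteq> {}"
    and npc: "\<not> path_connected (open_valley V z \<inter> ball z \<eta>)"
    and pc: "path_connected ((open_valley V z \<union> {z}) \<inter> ball z \<eta>)"
    using saddle unfolding is_saddle_def by blast
  define U where "U = open_valley V z \<inter> ball z \<eta>"
  define X where "X = (open_valley V z \<union> {z}) \<inter> ball z \<eta>"
  obtain r where r: "r > 0" and rV: "\<And>x. dist x z < r \<Longrightarrow> dist (V' x) (V' z) < n/4"
    using C1 n unfolding continuous_on_iff by (metis UNIV_I divide_pos_pos zero_less_numeral)
  define \<rho> where "\<rho> = min r \<eta> / (2*n)"
  have \<rho>: "\<rho> > 0" using r \<eta> n by (simp add: \<rho>_def)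
  have \<rho>n: "\<rho> * n = min r \<eta> / 2" using n by (simp add: \<rho>_def)
  define w where "w = z - \<rho> *\<^sub>R g"
  have wz: "norm (w - z) = \<rho> * n" using \<rho> by (simp add: w_def n_def)
  have inball: "norm (y + t *\<^sub>R (w - y) - z) \<le> \<rho> * n"
    if y: "norm (y - z) \<le> \<rho>*n/4" and t: "0 \<le> t" "t \<le> 1" for y t
  proof -
    have "y + t *\<^sub>R (w - y) - z = (1 - t) *\<^sub>R (y - z) + t *\<^sub>R (w - z)"
      by (simp add: algebra_simps)
    have yy: "norm (y - z) \<le> \<rho>*n" using y norm_ge_zero[of "y-z"] by linarith
    have "y + t *\<^sub>R (w - y) - z = (1 - t) *\<^sub>R (y - z) + t *\<^sub>R (w - z)"
      by (simp add: algebra_simps)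
    hence "norm (y + t *\<^sub>R (w - y) - z) \<le> (1-t) * norm (y - z) + t * norm (w - z)"
      using t by (metis abs_of_nonneg diff_ge_0_iff_ge norm_scaleR norm_triangle_ineq)
    also have "\<dots> \<le> (1-t) * (\<rho>*n) + t * (\<rho>*n)"
      using t yy wz by (intro add_mono mult_left_mono) auto
    finally show ?thesis by (simp add: algebra_simps)
  qed
  have negder: "blinfun_apply (V' x) (w - y) < 0"
    if y: "norm (y - z) \<le> \<rho>*n/4" and x: "norm (x - z) \<le> \<rho> * n" for x y
  proof -
    let ?v = "w - y"
    have dx: "dist x z < r" using x \<rho>n r \<eta> by (simp add: dist_norm)
    have e: "norm (V' x - V' z) < n/4" using rV[OF dx] by (simp add: dist_norm)
    have "blinfun_apply (V' x) ?v = g \<bullet> ?v + blinfun_apply (V' x - V' z) ?v"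
      by (simp add: blinfun.diff_left gradient_inner[of "V' z"] g_def)
    also have "blinfun_apply (V' x - V' z) ?v \<le> norm (V' x - V' z) * norm ?v"
      by (metis abs_le_D1 norm_blinfun real_norm_def)
    also have "norm ?v \<le> \<rho>*n + \<rho>*n/4"
    proof -
      have "?v = (w - z) + (z - y)" by simp
      hence "norm ?v \<le> norm (w - z) + norm (z - y)" by (metis norm_triangle_ineq)
      thus ?thesis using wz y by (simp add: norm_minus_commute)
    qed
    hence "norm (V' x - V' z) * norm ?v \<le> (n/4) * (\<rho>*n + \<rho>*n/4)"
      using e n by (intro mult_mono) auto
    also have "g \<bullet> ?v = - \<rho> * n^2 + g \<bullet> (z - y)"
      by (simp add: w_def inner_diff_right n_def power2_norm_eq_inner)
    also have "g \<bullet> (z - y) \<le> n * (\<rho>*n/4)"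
    proof -
      have "g \<bullet> (z - y) \<le> norm g * norm (z - y)" by (rule norm_cauchy_schwarz)
      also have "\<dots> \<le> n * (\<rho>*n/4)" using y n by (simp add: n_def norm_minus_commute)
      finally show ?thesis .
    qed
    finally have "blinfun_apply (V' x) ?v \<le> - \<rho> * n^2 + n * (\<rho>*n/4) + (n/4) * (\<rho>*n + \<rho>*n/4)"
      by simp
    also have "\<dots> = - (7/16) * \<rho> * n^2" by (simp add: algebra_simps power2_eq_square)
    also have "\<dots> < 0" using \<rho> n by simp
    finally show ?thesis .
  qed
  have seg: "V (y + t *\<^sub>R (w - y)) < V y"
    if y: "norm (y - z) \<le> \<rho>*n/4" and t: "0 < t" "t \<le> 1" for y t
  proof -
    define f where "f s = V (y + s *\<^sub>R (w - y))" for s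
    have D: "(f has_real_derivative blinfun_apply (V' (y + s *\<^sub>R (w - y))) (w - y)) (at s)" for s
    proof -
      have "((\<lambda>s. y + s *\<^sub>R (w - y)) has_derivative (\<lambda>h. h *\<^sub>R (w - y))) (at s)"
        by (auto intro!: derivative_eq_intros)
      from has_derivative_compose[OF this deriv]
      have "(f has_derivative (\<lambda>h. blinfun_apply (V' (y + s *\<^sub>R (w - y))) (h *\<^sub>R (w - y)))) (at s)"
        unfolding f_def[abs_def] .
      moreover have "(\<lambda>h. blinfun_apply (V' (y + s *\<^sub>R (w - y))) (h *\<^sub>R (w - y)))
          = (\<lambda>h. blinfun_apply (V' (y + s *\<^sub>R (w - y))) (w - y) * h)"
        by (simp add: blinfun.scaleR_right fun_eq_iff mult.commute)
      ultimately show ?thesis by (simp add: has_field_derivative_def)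
    qed
    obtain \<xi> where \<xi>: "0 < \<xi>" "\<xi> < t" and eq: "f t - f 0 = (t - 0) * blinfun_apply (V' (y + \<xi> *\<^sub>R (w - y))) (w - y)"
      using MVT2[OF t(1) D] by blast
    have "blinfun_apply (V' (y + \<xi> *\<^sub>R (w - y))) (w - y) < 0"
      using \<xi> t by (intro negder[OF y] inball[OF y]) auto
    hence "t * blinfun_apply (V' (y + \<xi> *\<^sub>R (w - y))) (w - y) < 0" using t by (simp add: mult_pos_neg)
    hence "f t < f 0" using eq by simp
    thus ?thesis by (simp add: f_def)
  qed
  have seg_le: "V (y + t *\<^sub>R (w - y)) \<le> V y"
    if y: "norm (y - z) \<le> \<rho>*n/4" and t: "0 \<le> t" "t \<le> 1" for y t
    using seg[OF y _ t(2)] t by (cases "t = 0") (auto intro: less_imp_le)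
  have K: "comm_height V (y + t *\<^sub>R (w - y)) z = V z"
    if y: "norm (y - z) \<le> \<rho>*n/4" and Vy: "V y \<le> V z" and t: "0 \<le> t" "t \<le> 1" for y t
  proof -
    define q where "q = y + t *\<^sub>R (w - y)"
    show ?thesis unfolding q_def[symmetric]
    proof (rule comm_height_eq[OF cont, of "linepath q w +++ linepath w z"])
      fix x assume "x \<in> path_image (linepath q w +++ linepath w z)"
      hence "x \<in> closed_segment q w \<or> x \<in> closed_segment w z"
        by (simp add: path_image_join)
      thus "V x \<le> V z"
      proof
        assume "x \<in> closed_segment q w"
        then obtain u where u: "0 \<le> u" "u \<le> 1" and xu: "x = (1 - u) *\<^sub>R q + u *\<^sub>R w"
          by (auto simp: in_segment)
        have "x = y + (t + u - u*t) *\<^sub>R (w - y)"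
          by (simp add: xu q_def algebra_simps)
        moreover have "0 \<le> t + u - u*t" using t u by (simp add: mult_le_one add_nonneg_nonneg)
          (metis add_increasing diff_ge_0_iff_ge mult_left_le)
        moreover have "t + u - u*t \<le> 1"
        proof -
          have "0 \<le> (1-t)*(1-u)" using t u by simp
          thus ?thesis by (simp add: algebra_simps)
        qed
        ultimately show ?thesis using seg_le[OF y] Vy by fastforce
      next
        assume "x \<in> closed_segment w z"
        then obtain u where u: "0 \<le> u" "u \<le> 1" and xu: "x = (1 - u) *\<^sub>R w + u *\<^sub>R z"
          by (auto simp: in_segment)
        have "x = z + (1 - u) *\<^sub>R (w - z)"
          by (simp add: xu algebra_simps)
        thus ?thesis using seg_le[of z "1 - u"] u \<rho> n by simp
      qed
    qed auto
  qed
  define \<delta> where "\<delta> = \<rho>*n/4"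
  have \<delta>: "\<delta> > 0" using \<rho> n by (simp add: \<delta>_def)
  have toW: "path_component U y w" if y: "dist y z < \<delta>" "V y < V z" for y
  proof -
    have yn: "norm (y - z) \<le> \<rho>*n/4" using y by (simp add: dist_norm \<delta>_def)
    have "path_image (linepath y w) \<subseteq> U"
    proof
      fix x assume "x \<in> path_image (linepath y w)"
      then obtain u where u: "0 \<le> u" "u \<le> 1" and xu: "x = (1 - u) *\<^sub>R y + u *\<^sub>R w"
        by (auto simp: in_segment)
      have xe: "x = y + u *\<^sub>R (w - y)" by (simp add: xu algebra_simps)
      have "comm_height V x z = V z" using K[OF yn _ u] y xe by simp
      moreover have "V x < V z" using seg_le[OF yn u] y xe by simp
      moreover have "norm (x - z) < \<eta>"
        using inball[OF yn u] xe \<rho>n \<eta> r by simp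
      ultimately show "x \<in> U"
        by (simp add: U_def open_valley_def closed_valley_def dist_norm norm_minus_commute)
    qed
    thus ?thesis unfolding path_component_def
      by (intro exI[of _ "linepath y w"]) auto
  qed
  have A: "path_component U a w" if a: "a \<in> U" for a
  proof -
    have aX: "a \<in> X" "z \<in> X" using a \<eta> by (auto simp: U_def X_def)
    obtain \<gamma> where \<gamma>: "path \<gamma>" "path_image \<gamma> \<subseteq> X" "pathstart \<gamma> = a" "pathfinish \<gamma> = z"
      using pc aX unfolding X_def[symmetric] path_connected_def by blast
    have az: "a \<noteq> z" using a by (auto simp: U_def open_valley_def)
    define T where "T = {0..1} \<inter> \<gamma> -` {z}"
    have Tc: "closed T" unfolding T_def
      using \<gamma>(1) by (intro continuous_closed_preimage) (auto simp: path_def)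
    have T1: "1 \<in> T" using \<gamma> by (auto simp: T_def pathfinish_def)
    have Tb: "bdd_below T" by (auto simp: T_def bdd_below_def)
    define t0 where "t0 = Inf T"
    have t0T: "t0 \<in> T" unfolding t0_def using Tc T1 Tb by (intro closed_contains_Inf) auto
    have t0le: "t0 \<le> t" if "t \<in> T" for t unfolding t0_def using that Tb by (rule cInf_lower)
    have t0pos: "t0 > 0"
    proof -
      have "t0 \<noteq> 0" using t0T az \<gamma>(3) by (auto simp: T_def pathstart_def)
      thus ?thesis using t0T by (auto simp: T_def)
    qed
    have "continuous_on {0..1} \<gamma>" using \<gamma>(1) by (simp add: path_def)
    then obtain e where e: "e > 0" and eb: "\<And>t. t \<in> {0..1} \<Longrightarrow> dist t t0 < e \<Longrightarrow> dist (\<gamma> t) (\<gamma> t0) < \<delta>"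
      using t0T \<delta> unfolding continuous_on_iff T_def by (metis IntD1)
    define t1 where "t1 = max (t0/2) (t0 - e/2)"
    have t1: "0 \<le> t1" "t1 < t0" "t1 \<le> 1" "dist t1 t0 < e"
      using t0pos e t0T by (auto simp: t1_def T_def dist_real_def)
    have g1: "\<gamma> t1 \<noteq> z" using t0le[of t1] t1 by (auto simp: T_def)
    have g1d: "dist (\<gamma> t1) z < \<delta>" using eb[of t1] t1 t0T by (auto simp: T_def)
    have sub: "\<gamma> s \<in> U" if s: "0 \<le> s" "s \<le> t1" for s
    proof -
      have "\<gamma> s \<in> X" using \<gamma>(2) s t1 by (auto simp: path_image_def)
      moreover have "\<gamma> s \<noteq> z" using t0le[of s] s t1 by (auto simp: T_def)
      ultimately show ?thesis by (auto simp: X_def U_def)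
    qed
    have p1: "path_component U a (\<gamma> t1)"
      unfolding path_component_def
    proof (intro exI[of _ "subpath 0 t1 \<gamma>"] conjI)
      show "path (subpath 0 t1 \<gamma>)" using \<gamma>(1) t1 by (intro path_subpath) auto
      show "path_image (subpath 0 t1 \<gamma>) \<subseteq> U" using t1 sub by (auto simp: path_image_subpath)
    qed (use \<gamma> in \<open>auto simp: pathstart_def pathfinish_def subpath_def\<close>)
    have "V (\<gamma> t1) < V z" using sub[of t1] t1 by (auto simp: U_def open_valley_def)
    hence "path_component U (\<gamma> t1) w" using toW g1d by blast
    thus ?thesis using p1 by (rule path_component_trans[rotated])
  qed
  have "path_connected U"
    unfolding path_connected_component
    using A by (meson path_component_sym path_component_trans)
  thus False using npc by (simp add: U_def)
qed

end
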